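(* Let $\Gamma=(G,\sigma)$ be a signed graph with edge weight $w$, vertex measure $\mu$ and potential $\kappa\ge 0$. Let $1\le p\le q$. Then for every $f\in\mathcal S_q$, $$2^{-p}\mathcal R_p^\sigma(\phi_{q,p}(f))\ \ge\ 2^{-q}\mathcal R_q^\sigma(f)\quad\text{and}\quad p\left(\frac{\mathcal R_p^\sigma(\phi_{q,p}(f))}{\mathcal D}\right)^{1/p}\le q\left(\frac{\mathcal R_q^\sigma(f)}{\mathcal D}\right)^{1/q},$$ where $\mathcal D:=\max_{1\le i\le n}\frac{2\kappa_i+\sum_{j\sim i}w_{ij}}{2\mu_i}$.
   Context: $G=(V,E)$ is a finite undirected graph without self-loops, $V=\{1,\dots,n\}$, $i\sim j$ means $\{i,j\}\in E$. A signed graph $\Gamma=(G,\sigma)$ has signature $\sigma:E\to\{\pm1\}$, $\sigma_{ij}=\sigma(\{i,j\})$, edge weight $w:E\to(0,\infty)$, vertex measure $\mu:V\to(0,\infty)$, potential $\kappa:V\to\mathbb R$. For $p\ge1$ and nonzero $f:V\to\mathbb R$, $\mathcal R_p^\sigma(f)=\frac{\sum_{\{i,j\}\in E}w_{ij}|f(i)-\sigma_{ij}f(j)|^p+\sum_i\kappa_i|f(i)|^p}{\sum_i\mu_i|f(i)|^p}$, and $\mathcal S_p=\{f:\sum_i\mu_i|f(i)|^p=1\}$. For $p,q\ge1$, $\phi_{q,p}:\mathcal S_q\to\mathcal S_p$ is defined by $\phi_{q,p}(f)(i)=|f(i)|^{q/p}\operatorname{sign}(f(i))$ for each $i$ (with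 $\operatorname{sign}(0)=0$). *)

theory Defs
  imports Complex_Main
begin

text \<open>Edges are unordered pairs, enumerated once as (i,j)
with i < j.\<close>

definition edges :: "nat \<Rightarrow> (nat \<Rightarrow> nat \<Rightarrow> bool) \<Rightarrow> (nat \<times> nat) set" where
  "edges n adj = {(i,j). i \<in> {1..n} \<and> j \<in> {1..n} \<and> i < j \<and> adj i j}"

definition signed_graph ::
  "nat \<Rightarrow> (nat \<Rightarrow> nat \<Rightarrow> bool) \<Rightarrow> (nat \<Rightarrow> nat \<Rightarrow> real) \<Rightarrow> (nat \<Rightarrow> nat \<Rightarrow> real)
   \<Rightarrow> (nat \<Rightarrow> real) \<Rightarrow> bool" where
  "signed_graph n adj sigma w mu \<longleftrightarrow>
     (\<forall>i\<in>{1..n}. \<not> adj i i) \<and>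
     (\<forall>i\<in>{1..n}. \<forall>j\<in>{1..n}. adj i j \<longrightarrow>
        adj j i \<and> sigma i j = sigma j i \<and> sigma i j \<in> {-1, 1} \<and> w i j = w j i \<and> w i j > 0) \<and>
     (\<forall>i\<in>{1..n}. mu i > 0)"

definition rayleigh ::
  "nat \<Rightarrow> (nat \<Rightarrow> nat \<Rightarrow> bool) \<Rightarrow> (nat \<Rightarrow> nat \<Rightarrow> real) \<Rightarrow> (nat \<Rightarrow> nat \<Rightarrow> real)
   \<Rightarrow> (nat \<Rightarrow> real) \<Rightarrow> (nat \<Rightarrow> real) \<Rightarrow> real \<Rightarrow> (nat \<Rightarrow> real) \<Rightarrow> real" where
  "rayleigh n adj sigma w mu kappa p f =
     ((\<Sum>(i,j)\<in>edges n adj. w i j * \<bar>f i - sigma i j * f j\<bar> powr p)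
        + (\<Sum>i\<in>{1..n}. kappa i * \<bar>f i\<bar> powr p))
     / (\<Sum>i\<in>{1..n}. mu i * \<bar>f i\<bar> powr p)"

definition sphere_p :: "nat \<Rightarrow> (nat \<Rightarrow> real) \<Rightarrow> real \<Rightarrow> (nat \<Rightarrow> real) set" where
  "sphere_p n mu p = {f. (\<Sum>i\<in>{1..n}. mu i * \<bar>f i\<bar> powr p) = 1}"

definition phi :: "real \<Rightarrow> real \<Rightarrow> (nat \<Rightarrow> real) \<Rightarrow> (nat \<Rightarrow> real)" where
  "phi q p f = (\<lambda>i. \<bar>f i\<bar> powr (q / p) * sgn (f i))"

definition Dconst ::
  "nat \<Rightarrow> (nat \<Rightarrow> nat \<Rightarrow> bool) \<Rightarrow> (nat \<Rightarrow> nat \<Rightarrow> real) \<Rightarrow> (nat \<Rightarrow> real) \<Rightarrow> (nat \<Rightarrow> real) \<Rightarrow> real" where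
  "Dconst n adj w mu kappa =
     Max ((\<lambda>i. (2 * kappa i + (\<Sum>j\<in>{j\<in>{1..n}. adj i j}. w i j)) / (2 * mu i)) ` {1..n})"

end

theory Submission
  imports Defs "HOL-Analysis.Convex"
begin


lemma young0:
  fixes u v a :: real
  assumes "0 \<le> u" "0 \<le> v" "0 \<le> a" "a \<le> 1"
  shows "u powr a * v powr (1 - a) \<le> a * u + (1 - a) * v"
proof (cases "u = 0 \<or> v = 0")
  case True then show ?thesis using assms by auto
next
  case False
  then show ?thesis using Youngs_inequality_0[of a "1-a" u v] assms by auto
qed

lemma tangent_concave:
  fixes s m t :: real
  assumes "0 \<le> s" "s \<le> 1" "0 < m" "0 \<le> t"
  shows "t powr s \<le> m powr s + s * m powr (s - 1) * (t - m)"
proof -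
  have "t powr s * m powr (1 - s) \<le> s * t + (1 - s) * m"
    using young0[of t m s] assms by auto
  then have "t powr s * m powr (1 - s) * m powr (s - 1) \<le> (s * t + (1 - s) * m) * m powr (s - 1)"
    by (rule mult_right_mono) simp
  moreover have "m powr (1 - s) * m powr (s - 1) = 1"
    using assms by (simp add: powr_add[symmetric])
  moreover have "m * m powr (s - 1) = m powr s"
    using assms by (simp add: powr_mult_base)
  ultimately show ?thesis
    by (simp add: algebra_simps) (metis mult.assoc mult.commute)
qed

lemma tangent_convex:
  fixes s m t :: real
  assumes "1 \<le> s" "0 < m" "0 \<le> t"
  shows "m powr s + s * m powr (s - 1) * (t - m) \<le> t powr s"
proof -
  have "(t powr s) powr (1/s) * (m powr s) powr (1 - 1/s) \<le> (1/s) * t powr s + (1 - 1/s) * m powr s"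
    using young0[of "t powr s" "m powr s" "1/s"] assms by auto
  moreover have "(t powr s) powr (1/s) = t" using assms by (simp add: powr_powr)
  moreover have "(m powr s) powr (1 - 1/s) = m powr (s - 1)" using assms
    by (simp add: powr_powr algebra_simps)
  ultimately have "t * m powr (s - 1) \<le> (1/s) * t powr s + (1 - 1/s) * m powr s" by simp
  then have "s * (t * m powr (s - 1)) \<le> s * ((1/s) * t powr s + (1 - 1/s) * m powr s)"
    using assms by (intro mult_left_mono) auto
  moreover have "m * m powr (s - 1) = m powr s"
    using assms by (simp add: powr_mult_base)
  ultimately show ?thesis using assms
    by (simp add: algebra_simps)
qed

lemma midpoint_convex:
  fixes k x y :: real
  assumes "1 \<le> k" "0 \<le> x" "0 \<le> y"
  shows "((x + y) / 2) powr k \<le> (x powr k + y powr k) / 2"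
proof (cases "x + y = 0")
  case True then show ?thesis using assms by auto
next
  case False
  define m where "m = (x + y) / 2"
  have m: "0 < m" using False assms by (simp add: m_def)
  have "m powr k + k * m powr (k - 1) * (x - m) \<le> x powr k"
    using tangent_convex[OF assms(1) m assms(2)] .
  moreover have "m powr k + k * m powr (k - 1) * (y - m) \<le> y powr k"
    using tangent_convex[OF assms(1) m assms(3)] .
  moreover have "(x - m) + (y - m) = 0" by (simp add: m_def)
  ultimately have "2 * m powr k \<le> x powr k + y powr k"
    by (smt (verit, best) distrib_left)
  then show ?thesis by (simp add: m_def)
qed

lemma two_powr_le:
  fixes r q :: real
  assumes "1 \<le> r" "r \<le> q"
  shows "2 powr ((r - 1) / q) \<le> r"
proof -
  have t0: "0 \<le> (r - 1) / q" "(r - 1) / q \<le> 1" using assms by auto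
  have "2 powr ((r - 1) / q) = 2 powr ((r - 1) / q) * 1 powr (1 - (r - 1) / q)" by simp
  also have "\<dots> \<le> (r - 1) / q * 2 + (1 - (r - 1) / q) * 1"
    using young0[of 2 1 "(r-1)/q"] t0 by simp
  also have "\<dots> = 1 + (r - 1) / q" by (simp add: algebra_simps)
  also have "\<dots> \<le> 1 + (r - 1) / r"
    using assms by (intro add_left_mono divide_left_mono) auto
  also have "\<dots> \<le> r"
  proof -
    have "1 + (r - 1) / r = 2 - 1 / r" using assms by (simp add: field_simps)
    moreover have "2 - 1 / r \<le> r"
    proof -
      have "0 \<le> (r - 1) * (r - 1)" by simp
      then have "2 * r - 1 \<le> r * r" by (simp add: algebra_simps)
      then show ?thesis using assms by (simp add: field_simps)
    qed
    ultimately show ?thesis by simp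
  qed
  finally show ?thesis .
qed



lemma hh1:
  fixes x y s :: real
  assumes "0 < y" "y \<le> x" "0 \<le> s" "s \<le> 1"
  shows "x powr (s+1) - y powr (s+1) \<le> (s+1) * (x - y) * ((x + y) / 2) powr s"
proof -
  define r where "r = s + 1"
  define h where "h = (\<lambda>t. r * (t - y) * ((t + y) / 2) powr s - t powr r)"
  have "h y \<le> h x"
  proof (rule DERIV_nonneg_imp_nondecreasing[OF assms(2)])
    fix t assume t: "y \<le> t" "t \<le> x"
    then have tp: "0 < t" using assms by auto
    have mp: "0 < (t + y) / 2" using tp assms by auto
    have d1: "DERIV (\<lambda>t. (t + y) / 2) t :> 1/2"
      by (auto intro!: derivative_eq_intros)
    have d2: "DERIV (\<lambda>t. ((t + y) / 2) powr s) t :> s * ((t + y) / 2) powr (s - of_nat 1) * (1/2)"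
      using DERIV_fun_powr[OF d1 mp] by simp
    have d3: "DERIV (\<lambda>t. r * (t - y)) t :> r"
      by (auto intro!: derivative_eq_intros)
    have d4: "DERIV (\<lambda>t. t powr r) t :> r * t powr (r - 1)"
      using has_real_derivative_powr[OF tp] .
    have D: "DERIV h t :> r * ((t + y) / 2) powr s + s * ((t + y) / 2) powr (s - of_nat 1) * (1/2) * (r * (t - y)) - r * t powr (r - 1)"
      unfolding h_def by (rule DERIV_diff[OF DERIV_mult[OF d3 d2] d4])
    define m where "m = (t + y) / 2"
    have tan: "t powr s \<le> m powr s + s * m powr (s - 1) * (t - m)"
      using tangent_concave[of s m t] assms mp tp by (simp add: m_def)
    have "0 \<le> r * (m powr s + s * m powr (s - 1) * (t - m) - t powr s)"
      using tan assms by (simp add: r_def)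
    also have "\<dots> = r * ((t + y) / 2) powr s + s * ((t + y) / 2) powr (s - of_nat 1) * (1/2) * (r * (t - y)) - r * t powr (r - 1)"
      unfolding m_def r_def by (simp add: field_simps)
    finally show "\<exists>y. DERIV h t :> y \<and> 0 \<le> y" using D by blast
  qed
  then show ?thesis by (simp add: h_def r_def algebra_simps)
qed

lemma hh2:
  fixes x y s :: real
  assumes "0 < y" "y \<le> x" "1 \<le> s"
  shows "x powr (s+1) - y powr (s+1) \<le> (s+1) * (x - y) * ((x powr s + y powr s) / 2)"
proof -
  define r where "r = s + 1"
  define h where "h = (\<lambda>t. (r / 2) * (t - y) * (t powr s + y powr s) - t powr r)"
  have "h y \<le> h x"
  proof (rule DERIV_nonneg_imp_nondecreasing[OF assms(2)])
    fix t assume t: "y \<le> t" "t \<le> x"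
    then have tp: "0 < t" using assms by auto
    have d2: "DERIV (\<lambda>t. t powr s + y powr s) t :> s * t powr (s - 1)"
      using has_real_derivative_powr[OF tp, of s] tp by (auto intro!: derivative_eq_intros)
    have d3: "DERIV (\<lambda>t. (r/2) * (t - y)) t :> r/2"
      by (auto intro!: derivative_eq_intros)
    have d4: "DERIV (\<lambda>t. t powr r) t :> r * t powr (r - 1)"
      using has_real_derivative_powr[OF tp] .
    have D: "DERIV h t :> r/2 * (t powr s + y powr s) + s * t powr (s - 1) * ((r/2) * (t - y)) - r * t powr (r - 1)"
      unfolding h_def by (rule DERIV_diff[OF DERIV_mult[OF d3 d2] d4])
    have tt: "t * t powr (s - 1) = t powr s" using tp by (simp add: powr_mult_base)
    have tan: "t powr s + s * t powr (s - 1) * (y - t) \<le> y powr s"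
      using tangent_convex[of s t y] assms tp by simp
    have "0 \<le> r/2 * (y powr s - (t powr s + s * t powr (s - 1) * (y - t)))"
      using tan assms by (simp add: r_def)
    also have "\<dots> = r/2 * (t powr s + y powr s) + s * t powr (s - 1) * ((r/2) * (t - y)) - r * t powr (r - 1)"
      by (simp add: r_def field_simps flip: tt)
    finally show "\<exists>y. DERIV h t :> y \<and> 0 \<le> y" using D by blast
  qed
  then show ?thesis by (simp add: h_def r_def algebra_simps)
qed



lemma mul_powr_le:
  fixes x m r :: real
  assumes "0 \<le> x" "x \<le> m" "1 \<le> r"
  shows "x powr r \<le> x * m powr (r - 1)"
proof (cases "x = 0")
  case True then show ?thesis by simp
next
  case False
  then have "x powr r = x * x powr (r - 1)" using assms by (simp add: powr_mult_base)
  also have "\<dots> \<le> x * m powr (r - 1)"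
    using assms by (intro mult_left_mono powr_mono2) auto
  finally show ?thesis .
qed

lemma O2:
  fixes x y r q :: real
  assumes "0 \<le> x" "0 \<le> y" "1 \<le> r" "r \<le> q"
  shows "x powr r + y powr r \<le> r * (x + y) * ((x powr q + y powr q) / 2) powr ((r - 1) / q)"
proof -
  define m where "m = max x y"
  define S where "S = (x powr q + y powr q) / 2"
  have S0: "0 \<le> S" by (simp add: S_def)
  have "x powr r + y powr r \<le> x * m powr (r - 1) + y * m powr (r - 1)"
    using mul_powr_le[of x m r] mul_powr_le[of y m r] assms by (auto simp: m_def)
  also have "\<dots> = (x + y) * m powr (r - 1)" by (simp add: algebra_simps)
  also have "\<dots> \<le> (x + y) * (r * S powr ((r - 1) / q))"
  proof (rule mult_left_mono)
    have "m powr q \<le> 2 * S" using assms by (auto simp: m_def S_def max_def)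
    then have "(m powr q) powr (1/q) \<le> (2 * S) powr (1/q)"
      using assms by (intro powr_mono2) auto
    then have m1: "m \<le> (2 * S) powr (1/q)" using assms by (simp add: powr_powr m_def)
    have "m powr (r - 1) \<le> ((2 * S) powr (1/q)) powr (r - 1)"
      using assms m1 by (intro powr_mono2) (auto simp: m_def)
    also have "\<dots> = 2 powr ((r - 1) / q) * S powr ((r - 1) / q)"
      using S0 by (simp add: powr_powr powr_mult)
    also have "\<dots> \<le> r * S powr ((r - 1) / q)"
      using two_powr_le[OF assms(3,4)] by (intro mult_right_mono) auto
    finally show "m powr (r - 1) \<le> r * S powr ((r - 1) / q)" .
  qed (use assms in auto)
  finally show ?thesis by (simp add: S_def algebra_simps)
qed

lemma S2:
  fixes x y r q :: real
  assumes "0 \<le> y" "y \<le> x" "1 \<le> r" "r \<le> q"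
  shows "x powr r - y powr r \<le> r * (x - y) * ((x powr q + y powr q) / 2) powr ((r - 1) / q)"
proof (cases "y = 0")
  case True
  then show ?thesis using O2[of x y r q] assms by simp
next
  case False
  then have yp: "0 < y" using assms by auto
  define S where "S = (x powr q + y powr q) / 2"
  define s where "s = r - 1"
  have rs: "r = s + 1" by (simp add: s_def)
  have q1: "1 \<le> q" using assms by simp
  show ?thesis
  proof (cases "r \<le> 2")
    case True
    have "x powr r - y powr r \<le> r * (x - y) * ((x + y) / 2) powr s"
      using hh1[of y x s] yp assms True by (simp add: rs)
    also have "\<dots> \<le> r * (x - y) * S powr ((r - 1) / q)"
    proof (rule mult_left_mono)
      have "((x + y) / 2) powr q \<le> S"
        using midpoint_convex[OF q1, of x y] assms by (simp add: S_def)
      then have "(((x + y) / 2) powr q) powr (1/q) \<le> S powr (1/q)"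
        by (intro powr_mono2) (use assms in auto)
      then have "(x + y) / 2 \<le> S powr (1/q)" using assms by (simp add: powr_powr)
      then have "((x + y) / 2) powr s \<le> (S powr (1/q)) powr s"
        by (intro powr_mono2) (use assms in \<open>auto simp: s_def\<close>)
      then show "((x + y) / 2) powr s \<le> S powr ((r - 1) / q)"
        by (simp add: powr_powr s_def)
    qed (use assms in auto)
    finally show ?thesis by (simp add: S_def)
  next
    case False
    have "x powr r - y powr r \<le> r * (x - y) * ((x powr s + y powr s) / 2)"
      using hh2[of y x s] yp assms False by (simp add: rs)
    also have "\<dots> \<le> r * (x - y) * S powr ((r - 1) / q)"
    proof (rule mult_left_mono)
      have k1: "1 \<le> q / s" using assms False by (simp add: s_def)
      have sp: "0 < s" using False by (simp add: s_def)
      have "((x powr s + y powr s) / 2) powr (q / s) \<le> ((x powr s) powr (q/s) + (y powr s) powr (q/s)) / 2"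
        using midpoint_convex[OF k1, of "x powr s" "y powr s"] by simp
      also have "\<dots> = S" using sp by (simp add: powr_powr S_def)
      finally have "(((x powr s + y powr s) / 2) powr (q / s)) powr (s/q) \<le> S powr (s/q)"
        by (intro powr_mono2) (use sp assms in auto)
      then show "(x powr s + y powr s) / 2 \<le> S powr ((r - 1) / q)"
        using sp q1 by (simp add: powr_powr s_def)
    qed (use assms in auto)
    finally show ?thesis by (simp add: S_def)
  qed
qed

lemma super_add:
  fixes y z r :: real
  assumes "0 \<le> y" "0 \<le> z" "1 \<le> r"
  shows "y powr r + z powr r \<le> (y + z) powr r"
proof -
  have "y powr r + z powr r \<le> y * (y + z) powr (r - 1) + z * (y + z) powr (r - 1)"
    using mul_powr_le[of y "y+z" r] mul_powr_le[of z "y+z" r] assms by auto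
  also have "\<dots> = (y + z) * (y + z) powr (r - 1)" by (simp add: algebra_simps)
  also have "\<dots> = (y + z) powr r" using assms by (simp add: powr_mult_base)
  finally show ?thesis .
qed



definition ph :: "real \<Rightarrow> real \<Rightarrow> real" where
  "ph r x = \<bar>x\<bar> powr r * sgn x"

lemma L1s:
  fixes x y r :: real
  assumes "0 \<le> x" "0 \<le> y" "1 \<le> r"
  shows "(\<bar>x - y\<bar> / 2) powr r \<le> \<bar>x powr r - y powr r\<bar> / 2"
proof -
  have gen: "(\<bar>x - y\<bar> / 2) powr r \<le> \<bar>x powr r - y powr r\<bar> / 2"
    if h: "0 \<le> y" "y \<le> x" for x y
  proof -
    have "(x - y) powr r + y powr r \<le> x powr r"
      using super_add[of "x - y" y r] h assms by simp
    moreover have "y powr r \<le> x powr r" using h assms by (intro powr_mono2) auto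
    moreover have "(\<bar>x - y\<bar> / 2) powr r = (x - y) powr r / 2 powr r"
      using h by (simp add: powr_divide)
    moreover have "2 powr 1 \<le> 2 powr r" using assms by (intro powr_mono) auto
    moreover have "0 \<le> (x - y) powr r" by simp
    moreover have "(x - y) powr r / 2 powr r \<le> (x - y) powr r / 2"
      by (rule divide_left_mono) (use \<open>2 powr 1 \<le> 2 powr r\<close> in auto)
    ultimately have "(\<bar>x - y\<bar> / 2) powr r \<le> (x - y) powr r / 2"
      by simp
    then show ?thesis using \<open>(x - y) powr r + y powr r \<le> x powr r\<close> by simp
  qed
  show ?thesis
  proof (cases "y \<le> x")
    case True then show ?thesis using gen assms by auto
  next
    case False then show ?thesis using gen[of x y] assms by (simp add: abs_minus_commute)
  qed
qed

lemma L2s: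
  fixes x y r q :: real
  assumes "0 \<le> x" "0 \<le> y" "1 \<le> r" "r \<le> q"
  shows "\<bar>x powr r - y powr r\<bar> \<le> r * \<bar>x - y\<bar> * ((x powr q + y powr q) / 2) powr ((r - 1) / q)"
proof (cases "y \<le> x")
  case True
  moreover have "y powr r \<le> x powr r" using True assms by (intro powr_mono2) auto
  ultimately show ?thesis using S2[of y x r q] assms by simp
next
  case False
  moreover have "x powr r \<le> y powr r" using False assms by (intro powr_mono2) auto
  ultimately show ?thesis using S2[of x y r q] assms by (simp add: add.commute)
qed

lemma ph_nonneg: "0 \<le> a \<Longrightarrow> ph r a = a powr r"
  by (cases "a = 0") (auto simp: ph_def)

lemma ph_neg: "a < 0 \<Longrightarrow> ph r a = - (\<bar>a\<bar> powr r)"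
  by (auto simp: ph_def)

lemma L1:
  fixes a b r :: real
  assumes "1 \<le> r"
  shows "(\<bar>a - b\<bar> / 2) powr r \<le> \<bar>ph r a - ph r b\<bar> / 2"
proof -
  consider "0 \<le> a" "0 \<le> b" | "0 \<le> a" "b < 0" | "a < 0" "0 \<le> b" | "a < 0" "b < 0" by linarith
  then show ?thesis
  proof cases
    case 1 then show ?thesis using L1s[of a b r] assms
      by (simp add: ph_nonneg)
  next
    case 2 note cs = this
    have e: "ph r a - ph r b = \<bar>a\<bar> powr r + \<bar>b\<bar> powr r" using cs by (simp add: ph_nonneg ph_neg)
    have "\<bar>ph r a - ph r b\<bar> = \<bar>a\<bar> powr r + \<bar>b\<bar> powr r"
      unfolding e by (simp add: abs_of_nonneg)
    moreover have "\<bar>a - b\<bar> = \<bar>a\<bar> + \<bar>b\<bar>" using cs by simp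
    ultimately have "\<bar>a - b\<bar> = \<bar>a\<bar> + \<bar>b\<bar>" "\<bar>ph r a - ph r b\<bar> = \<bar>a\<bar> powr r + \<bar>b\<bar> powr r"
      by simp_all
    then show ?thesis using midpoint_convex[OF assms, of "\<bar>a\<bar>" "\<bar>b\<bar>"] by simp
  next
    case 3 note cs = this
    have e: "ph r a - ph r b = - (\<bar>a\<bar> powr r + \<bar>b\<bar> powr r)" using cs by (simp add: ph_nonneg ph_neg)
    have "\<bar>ph r a - ph r b\<bar> = \<bar>a\<bar> powr r + \<bar>b\<bar> powr r"
      unfolding e abs_minus_cancel by (simp add: abs_of_nonneg)
    moreover have "\<bar>a - b\<bar> = \<bar>a\<bar> + \<bar>b\<bar>" using cs by simp
    ultimately have "\<bar>a - b\<bar> = \<bar>a\<bar> + \<bar>b\<bar>" "\<bar>ph r a - ph r b\<bar> = \<bar>a\<bar> powr r + \<bar>b\<bar> powr r"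
      by simp_all
    then show ?thesis using midpoint_convex[OF assms, of "\<bar>a\<bar>" "\<bar>b\<bar>"] by simp
  next
    case 4
    then have "\<bar>a - b\<bar> = \<bar>\<bar>a\<bar> - \<bar>b\<bar>\<bar>" "\<bar>ph r a - ph r b\<bar> = \<bar>\<bar>a\<bar> powr r - \<bar>b\<bar> powr r\<bar>"
      by (simp_all add: ph_neg)
    then show ?thesis using L1s[of "\<bar>a\<bar>" "\<bar>b\<bar>" r] assms by simp
  qed
qed

lemma L2:
  fixes a b r q :: real
  assumes "1 \<le> r" "r \<le> q"
  shows "\<bar>ph r a - ph r b\<bar> \<le> r * \<bar>a - b\<bar> * ((\<bar>a\<bar> powr q + \<bar>b\<bar> powr q) / 2) powr ((r - 1) / q)"
proof -
  consider "0 \<le> a" "0 \<le> b" | "0 \<le> a" "b < 0" | "a < 0" "0 \<le> b" | "a < 0" "b < 0" by linarith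
  then show ?thesis
  proof cases
    case 1 then show ?thesis using L2s[of a b r q] assms
      by (simp add: ph_nonneg)
  next
    case 2 note cs = this
    have e: "ph r a - ph r b = \<bar>a\<bar> powr r + \<bar>b\<bar> powr r" using cs by (simp add: ph_nonneg ph_neg)
    have "\<bar>ph r a - ph r b\<bar> = \<bar>a\<bar> powr r + \<bar>b\<bar> powr r"
      unfolding e by (simp add: abs_of_nonneg)
    moreover have "\<bar>a - b\<bar> = \<bar>a\<bar> + \<bar>b\<bar>" using cs by simp
    ultimately have "\<bar>a - b\<bar> = \<bar>a\<bar> + \<bar>b\<bar>" "\<bar>ph r a - ph r b\<bar> = \<bar>a\<bar> powr r + \<bar>b\<bar> powr r"
      by simp_all
    then show ?thesis using O2[of "\<bar>a\<bar>" "\<bar>b\<bar>" r q] assms by simp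
  next
    case 3 note cs = this
    have e: "ph r a - ph r b = - (\<bar>a\<bar> powr r + \<bar>b\<bar> powr r)" using cs by (simp add: ph_nonneg ph_neg)
    have "\<bar>ph r a - ph r b\<bar> = \<bar>a\<bar> powr r + \<bar>b\<bar> powr r"
      unfolding e abs_minus_cancel by (simp add: abs_of_nonneg)
    moreover have "\<bar>a - b\<bar> = \<bar>a\<bar> + \<bar>b\<bar>" using cs by simp
    ultimately have "\<bar>a - b\<bar> = \<bar>a\<bar> + \<bar>b\<bar>" "\<bar>ph r a - ph r b\<bar> = \<bar>a\<bar> powr r + \<bar>b\<bar> powr r"
      by simp_all
    then show ?thesis using O2[of "\<bar>a\<bar>" "\<bar>b\<bar>" r q] assms by simp
  next
    case 4
    then have "\<bar>a - b\<bar> = \<bar>\<bar>a\<bar> - \<bar>b\<bar>\<bar>" "\<bar>ph r a - ph r b\<bar> = \<bar>\<bar>a\<bar> powr r - \<bar>b\<bar> powr r\<bar>"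
      by (simp_all add: ph_neg)
    then show ?thesis using L2s[of "\<bar>a\<bar>" "\<bar>b\<bar>" r q] assms by simp
  qed
qed



lemma holder:
  fixes u v :: "'a \<Rightarrow> real"
  assumes "finite A" "\<And>i. i \<in> A \<Longrightarrow> 0 \<le> u i" "\<And>i. i \<in> A \<Longrightarrow> 0 \<le> v i" "0 < t" "t < 1"
  shows "(\<Sum>i\<in>A. u i powr t * v i powr (1 - t)) \<le> (\<Sum>i\<in>A. u i) powr t * (\<Sum>i\<in>A. v i) powr (1 - t)"
proof -
  define U where "U = (\<Sum>i\<in>A. u i)"
  define V where "V = (\<Sum>i\<in>A. v i)"
  have U0: "0 \<le> U" "0 \<le> V" using assms by (auto simp: U_def V_def intro: sum_nonneg)
  show ?thesis
  proof (cases "U = 0 \<or> V = 0")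
    case True
    then have "\<forall>i\<in>A. u i = 0 \<or> v i = 0"
      using assms sum_nonneg_eq_0_iff[of A u] sum_nonneg_eq_0_iff[of A v] by (auto simp: U_def V_def)
    then have "(\<Sum>i\<in>A. u i powr t * v i powr (1 - t)) = 0" by (intro sum.neutral) auto
    then show ?thesis by (simp add: U_def[symmetric] V_def[symmetric])
  next
    case False
    then have Up: "0 < U" "0 < V" using U0 by auto
    have "(\<Sum>i\<in>A. u i powr t * v i powr (1 - t))
        = (\<Sum>i\<in>A. U powr t * V powr (1 - t) * ((u i / U) powr t * (v i / V) powr (1 - t)))"
    proof (rule sum.cong)
      fix i assume "i \<in> A"
      have "U powr t * (u i / U) powr t = u i powr t" using Up assms \<open>i \<in> A\<close>
        by (simp add: powr_divide)
      moreover have "V powr (1 - t) * (v i / V) powr (1 - t) = v i powr (1 - t)" using Up assms \<open>i \<in> A\<close>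
        by (simp add: powr_divide)
      ultimately show "u i powr t * v i powr (1 - t) = U powr t * V powr (1 - t) * ((u i / U) powr t * (v i / V) powr (1 - t))"
        by (metis mult.assoc mult.commute)
    qed simp
    also have "\<dots> \<le> (\<Sum>i\<in>A. U powr t * V powr (1 - t) * (t * (u i / U) + (1 - t) * (v i / V)))"
      using assms Up by (intro sum_mono mult_left_mono young0) auto
    also have "\<dots> = U powr t * V powr (1 - t) * (t * (\<Sum>i\<in>A. u i) / U + (1 - t) * (\<Sum>i\<in>A. v i) / V)"
      by (simp add: sum_distrib_left sum.distrib sum_divide_distrib[symmetric] algebra_simps)
    also have "\<dots> = U powr t * V powr (1 - t)"
      using Up by (simp add: U_def[symmetric] V_def[symmetric])
    finally show ?thesis by (simp add: U_def V_def)
  qed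
qed

lemma holder2:
  fixes a1 b1 a2 b2 t :: real
  assumes "0 \<le> a1" "0 \<le> b1" "0 \<le> a2" "0 \<le> b2" "0 < t" "t < 1"
  shows "a1 powr t * b1 powr (1 - t) + a2 powr t * b2 powr (1 - t) \<le> (a1 + a2) powr t * (b1 + b2) powr (1 - t)"
  using holder[of "UNIV :: bool set" "\<lambda>x. if x then a1 else a2" "\<lambda>x. if x then b1 else b2" t] assms
  by (simp add: UNIV_bool add.commute)

lemma edges_sum:
  "sum F (edges n adj) = (\<Sum>i\<in>{1..n}. \<Sum>j\<in>{1..n}. if i < j \<and> adj i j then F (i, j) else 0)"
proof -
  have "edges n adj = Sigma {1..n} (\<lambda>i. {j\<in>{1..n}. i < j \<and> adj i j})"
    by (auto simp: edges_def)
  moreover have "(\<Sum>i\<in>{1..n}. \<Sum>j\<in>{j\<in>{1..n}. i < j \<and> adj i j}. F (i, j))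
     = (\<Sum>(i,j)\<in>Sigma {1..n} (\<lambda>i. {j\<in>{1..n}. i < j \<and> adj i j}). F (i, j))"
    by (rule sum.Sigma) auto
  ultimately have "sum F (edges n adj) = (\<Sum>i\<in>{1..n}. \<Sum>j\<in>{j\<in>{1..n}. i < j \<and> adj i j}. F (i, j))"
    by (simp add: split_def)
  also have "\<dots> = (\<Sum>i\<in>{1..n}. \<Sum>j\<in>{1..n}. if i < j \<and> adj i j then F (i, j) else 0)"
    by (rule sum.cong[OF refl], rule sum.inter_filter, simp)
  finally show ?thesis .
qed

lemma edges_double:
  fixes h :: "nat \<Rightarrow> real"
  assumes sg: "signed_graph n adj sigma w mu"
  shows "(\<Sum>(i,j)\<in>edges n adj. w i j * (h i + h j))
       = (\<Sum>i\<in>{1..n}. (\<Sum>j\<in>{j\<in>{1..n}. adj i j}. w i j) * h i)"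
proof -
  have irr: "\<And>i. i \<in> {1..n} \<Longrightarrow> \<not> adj i i" and sym: "\<And>i j. i \<in> {1..n} \<Longrightarrow> j \<in> {1..n} \<Longrightarrow> adj i j \<Longrightarrow> adj j i \<and> w i j = w j i"
    using sg unfolding signed_graph_def by blast+
  have "(\<Sum>(i,j)\<in>edges n adj. w i j * (h i + h j))
      = (\<Sum>i\<in>{1..n}. \<Sum>j\<in>{1..n}. if i < j \<and> adj i j then w i j * h i else 0)
      + (\<Sum>i\<in>{1..n}. \<Sum>j\<in>{1..n}. if i < j \<and> adj i j then w i j * h j else 0)"
    by (simp add: edges_sum sum.distrib[symmetric] algebra_simps if_distrib cong: if_cong)
  also have "(\<Sum>i\<in>{1..n}. \<Sum>j\<in>{1..n}. if i < j \<and> adj i j then w i j * h j else 0)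
      = (\<Sum>j\<in>{1..n}. \<Sum>i\<in>{1..n}. if i < j \<and> adj i j then w i j * h j else 0)"
    by (rule sum.swap)
  also have "\<dots> = (\<Sum>i\<in>{1..n}. \<Sum>j\<in>{1..n}. if j < i \<and> adj i j then w i j * h i else 0)"
    by (intro sum.cong refl) (use sym in auto)
  also have "(\<Sum>i\<in>{1..n}. \<Sum>j\<in>{1..n}. if i < j \<and> adj i j then w i j * h i else 0)
      + (\<Sum>i\<in>{1..n}. \<Sum>j\<in>{1..n}. if j < i \<and> adj i j then w i j * h i else 0)
      = (\<Sum>i\<in>{1..n}. \<Sum>j\<in>{1..n}. if adj i j then w i j * h i else 0)"
    unfolding sum.distrib[symmetric]
    by (intro sum.cong refl) (use irr in \<open>auto simp: linorder_neq_iff\<close>)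
  also have "\<dots> = (\<Sum>i\<in>{1..n}. (\<Sum>j\<in>{j\<in>{1..n}. adj i j}. w i j) * h i)"
  proof (rule sum.cong[OF refl])
    fix i
    have "(\<Sum>j\<in>{j\<in>{1..n}. adj i j}. w i j) * h i = (\<Sum>j\<in>{j\<in>{1..n}. adj i j}. w i j * h i)"
      by (rule sum_distrib_right)
    also have "\<dots> = (\<Sum>j\<in>{1..n}. if adj i j then w i j * h i else 0)"
      by (rule sum.inter_filter) simp
    finally show "(\<Sum>j\<in>{1..n}. if adj i j then w i j * h i else 0) = (\<Sum>j\<in>{j\<in>{1..n}. adj i j}. w i j) * h i"
      by (rule HOL.sym)
  qed
  finally show ?thesis .
qed



lemma ph_abs: "\<bar>ph r x\<bar> = \<bar>x\<bar> powr r"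
  by (cases "x = 0") (auto simp: ph_def abs_mult)

lemma ph_sign: "s \<in> {-1, 1} \<Longrightarrow> s * ph r x = ph r (s * x)"
  by (auto simp: ph_def sgn_minus)

lemma ph_one: "ph 1 x = x"
  by (simp add: ph_def abs_mult_sgn)

lemma edge1:
  fixes w a b p q :: real
  assumes "0 \<le> w" "1 \<le> p" "p \<le> q"
  shows "2 powr (-q) * (w * \<bar>a - b\<bar> powr q) \<le> 2 powr (-p) * (w * \<bar>ph (q/p) a - ph (q/p) b\<bar> powr p)"
proof -
  have r1: "1 \<le> q / p" using assms by simp
  have "((\<bar>a - b\<bar> / 2) powr (q/p)) powr p \<le> (\<bar>ph (q/p) a - ph (q/p) b\<bar> / 2) powr p"
    using L1[OF r1, of a b] assms by (intro powr_mono2) auto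
  moreover have "((\<bar>a - b\<bar> / 2) powr (q/p)) powr p = 2 powr (-q) * \<bar>a - b\<bar> powr q"
    using assms by (simp add: powr_powr powr_divide powr_minus_divide)
  moreover have "(\<bar>ph (q/p) a - ph (q/p) b\<bar> / 2) powr p = 2 powr (-p) * \<bar>ph (q/p) a - ph (q/p) b\<bar> powr p"
    by (simp add: powr_divide powr_minus_divide)
  ultimately have "2 powr (-q) * \<bar>a - b\<bar> powr q \<le> 2 powr (-p) * \<bar>ph (q/p) a - ph (q/p) b\<bar> powr p"
    by simp
  then show ?thesis using assms(1)
    by (metis mult.left_commute mult_left_mono)
qed

lemma edge2:
  fixes w a b p q :: real
  assumes "0 < w" "1 \<le> p" "p < q"
  shows "w * \<bar>ph (q/p) a - ph (q/p) b\<bar> powr p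
    \<le> (q/p) powr p * ((w * \<bar>a - b\<bar> powr q) powr (p/q) * (w * ((\<bar>a\<bar> powr q + \<bar>b\<bar> powr q) / 2)) powr (1 - p/q))"
proof -
  define r where "r = q / p"
  define S where "S = (\<bar>a\<bar> powr q + \<bar>b\<bar> powr q) / 2"
  define t where "t = p / q"
  have r1: "1 \<le> r" "r \<le> q" using assms by (auto simp: r_def field_simps)
  have S0: "0 \<le> S" by (simp add: S_def)
  have "\<bar>ph r a - ph r b\<bar> powr p \<le> (r * \<bar>a - b\<bar> * S powr ((r - 1) / q)) powr p"
    using L2[OF r1, of a b] assms by (intro powr_mono2) (auto simp: S_def)
  also have "\<dots> = r powr p * (\<bar>a - b\<bar> powr q) powr t * S powr (1 - t)"
  proof -
    have e1: "(r - 1) / q * p = 1 - t" "(r - 1) * p / q = 1 - t" using assms by (simp_all add: r_def t_def field_simps)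
    have e2: "q * t = p" using assms by (simp add: t_def)
    show ?thesis using r1 S0
      by (simp add: powr_mult powr_powr e1 e2)
  qed
  finally have A: "\<bar>ph r a - ph r b\<bar> powr p \<le> r powr p * (\<bar>a - b\<bar> powr q) powr t * S powr (1 - t)" .
  have wsplit: "w = w powr t * w powr (1 - t)"
    using assms by (simp add: powr_add[symmetric])
  have "w * \<bar>ph r a - ph r b\<bar> powr p \<le> w * (r powr p * (\<bar>a - b\<bar> powr q) powr t * S powr (1 - t))"
    using A assms by (intro mult_left_mono) auto
  also have "\<dots> = r powr p * ((w * \<bar>a - b\<bar> powr q) powr t * (w * S) powr (1 - t))"
    using assms S0 by (subst wsplit) (simp add: powr_mult algebra_simps)
  finally show ?thesis by (simp add: r_def S_def t_def)
qed

lemma vert2: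
  fixes k r p t :: real
  assumes "0 \<le> k" "1 \<le> r" "0 \<le> p"
  shows "k \<le> r powr p * (k powr t * k powr (1 - t))"
proof (cases "k = 0")
  case True then show ?thesis by simp
next
  case False
  then have "k powr t * k powr (1 - t) = k" using assms by (simp add: powr_add[symmetric])
  moreover have "1 \<le> r powr p" using assms by (simp add: ge_one_powr_ge_zero)
  ultimately show ?thesis using assms by (simp add: mult_le_cancel_right1)
qed

lemma final_alg:
  fixes Rp Rq D p q :: real
  assumes "0 \<le> Rp" "0 \<le> Rq" "0 < D" "1 \<le> p" "p < q"
    and H: "Rp \<le> (q/p) powr p * (Rq powr (p/q) * D powr (1 - p/q))"
  shows "p * (Rp / D) powr (1 / p) \<le> q * (Rq / D) powr (1 / q)"
proof -
  define t where "t = p / q"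
  define r where "r = q / p"
  have "Rp / D \<le> r powr p * (Rq powr t * D powr (1 - t)) / D"
    using H assms by (simp add: divide_right_mono r_def t_def)
  also have "\<dots> = r powr p * (Rq / D) powr t"
    using assms by (simp add: powr_diff powr_divide)
  finally have B: "Rp / D \<le> r powr p * (Rq / D) powr t" .
  have "(Rp / D) powr (1/p) \<le> (r powr p * (Rq / D) powr t) powr (1/p)"
    using B assms by (intro powr_mono2) auto
  also have "\<dots> = r * (Rq / D) powr (1/q)"
  proof -
    have "t * (1/p) = 1/q" using assms by (simp add: t_def)
    moreover have "p * (1/p) = 1" using assms by simp
    moreover have "0 \<le> r" using assms by (simp add: r_def)
    ultimately show ?thesis using assms by (simp add: powr_mult powr_powr)
  qed
  finally have "p * (Rp / D) powr (1/p) \<le> p * (r * (Rq / D) powr (1/q))"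
    using assms by (intro mult_left_mono) auto
  also have "\<dots> = q * (Rq / D) powr (1/q)" using assms by (simp add: r_def)
  finally show ?thesis .
qed



theorem lemma3p4:
  fixes n :: nat and adj :: "nat \<Rightarrow> nat \<Rightarrow> bool" and sigma w :: "nat \<Rightarrow> nat \<Rightarrow> real"
    and mu kappa f :: "nat \<Rightarrow> real" and p q :: real
  assumes "signed_graph n adj sigma w mu"
    and "\<forall>i\<in>{1..n}. kappa i \<ge> 0"
    and "1 \<le> p" and "p \<le> q"
    and "f \<in> sphere_p n mu q"
  shows "(2 powr (-p) * rayleigh n adj sigma w mu kappa p (phi q p f)
           \<ge> 2 powr (-q) * rayleigh n adj sigma w mu kappa q f) \<and>
         (p * (rayleigh n adj sigma w mu kappa p (phi q p f) / Dconst n adj w mu kappa) powr (1 / p)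
           \<le> q * (rayleigh n adj sigma w mu kappa q f / Dconst n adj w mu kappa) powr (1 / q))"
proof -
  note sg = assms(1)
  have edge_props: "w i j > 0 \<and> sigma i j \<in> {-1, 1}" if "(i, j) \<in> edges n adj" for i j
    using sg that unfolding signed_graph_def edges_def by auto
  have mupos: "\<And>i. i \<in> {1..n} \<Longrightarrow> mu i > 0" using sg unfolding signed_graph_def by auto
  have wadj: "\<And>i j. i \<in> {1..n} \<Longrightarrow> j \<in> {1..n} \<Longrightarrow> adj i j \<Longrightarrow> w i j > 0"
    using sg unfolding signed_graph_def by auto
  have kap: "\<And>i. i \<in> {1..n} \<Longrightarrow> kappa i \<ge> 0" using assms(2) by auto
  have p0: "0 < p" using assms(3) by simp
  define r where "r = q / p"
  define g where "g = phi q p f"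
  have g_ph: "\<And>i. g i = ph r (f i)" by (simp add: g_def phi_def ph_def r_def)
  have absg: "\<And>i. \<bar>g i\<bar> powr p = \<bar>f i\<bar> powr q"
    using p0 by (simp add: g_ph ph_abs powr_powr r_def)
  define h where "h i = \<bar>f i\<bar> powr q" for i
  have h0: "\<And>i. 0 \<le> h i" by (simp add: h_def)
  have sph: "(\<Sum>i\<in>{1..n}. mu i * h i) = 1" using assms(5) by (simp add: sphere_p_def h_def)
  have denp: "(\<Sum>i\<in>{1..n}. mu i * \<bar>g i\<bar> powr p) = 1" using sph by (simp add: absg h_def)
  define Ep where "Ep = (\<Sum>(i,j)\<in>edges n adj. w i j * \<bar>g i - sigma i j * g j\<bar> powr p)"
  define Eq where "Eq = (\<Sum>(i,j)\<in>edges n adj. w i j * \<bar>f i - sigma i j * f j\<bar> powr q)"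
  define K where "K = (\<Sum>i\<in>{1..n}. kappa i * h i)"
  have Rp: "rayleigh n adj sigma w mu kappa p g = Ep + K"
    unfolding rayleigh_def denp Ep_def K_def by (simp add: absg h_def)
  have Rq: "rayleigh n adj sigma w mu kappa q f = Eq + K"
    unfolding rayleigh_def Eq_def K_def using sph by (simp add: h_def)
  have finE: "finite (edges n adj)"
    by (rule finite_subset[of _ "{1..n} \<times> {1..n}"]) (auto simp: edges_def)
  have edge_g: "\<bar>g i - sigma i j * g j\<bar> = \<bar>ph r (f i) - ph r (sigma i j * f j)\<bar>"
    if "(i, j) \<in> edges n adj" for i j
    using edge_props[OF that] by (simp add: g_ph ph_sign)
  have edge_abs: "\<bar>sigma i j * f j\<bar> = \<bar>f j\<bar>" if "(i, j) \<in> edges n adj" for i j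
    using edge_props[OF that] by (auto simp: abs_mult)
  have K0: "0 \<le> K" unfolding K_def using kap h0 by (intro sum_nonneg) auto
  have Eq0: "0 \<le> Eq" unfolding Eq_def using edge_props
    by (intro sum_nonneg) (auto simp: less_imp_le)
  have Ep0: "0 \<le> Ep" unfolding Ep_def using edge_props
    by (intro sum_nonneg) (auto simp: less_imp_le)
  have c1: "2 powr (-q) * (Eq + K) \<le> 2 powr (-p) * (Ep + K)"
  proof -
    have "2 powr (-q) * Eq \<le> 2 powr (-p) * Ep"
      unfolding Eq_def Ep_def sum_distrib_left
    proof (rule sum_mono)
      fix e assume e: "e \<in> edges n adj"
      obtain i j where ij: "e = (i, j)" by fastforce
      have "2 powr (-q) * (w i j * \<bar>f i - sigma i j * f j\<bar> powr q)
          \<le> 2 powr (-p) * (w i j * \<bar>ph (q/p) (f i) - ph (q/p) (sigma i j * f j)\<bar> powr p)"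
        using edge1[of "w i j" p q "f i" "sigma i j * f j"] edge_props[of i j] e ij assms(3,4) by auto
      then show "2 powr (-q) * (case e of (i, j) \<Rightarrow> w i j * \<bar>f i - sigma i j * f j\<bar> powr q)
          \<le> 2 powr (-p) * (case e of (i, j) \<Rightarrow> w i j * \<bar>g i - sigma i j * g j\<bar> powr p)"
        using edge_g[of i j] e ij by (simp add: r_def)
    qed
    moreover have "2 powr (-q) * K \<le> 2 powr (-p) * K"
      using K0 assms(4) by (intro mult_right_mono) auto
    ultimately show ?thesis by (simp add: distrib_left)
  qed
  define D where "D = Dconst n adj w mu kappa"
  define deg where "deg i = (\<Sum>j\<in>{j\<in>{1..n}. adj i j}. w i j)" for i
  have n1: "{1..n} \<noteq> {}" using sph by (metis sum.empty zero_neq_one)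
  have Dge: "(2 * kappa i + deg i) / (2 * mu i) \<le> D" if "i \<in> {1..n}" for i
    unfolding D_def Dconst_def deg_def using that by (intro Max_ge) auto
  have deg0: "0 \<le> deg i" if "i \<in> {1..n}" for i
    unfolding deg_def using wadj that by (intro sum_nonneg) (auto simp: less_imp_le)
  have D0: "0 \<le> D"
  proof -
    obtain i where i: "i \<in> {1..n}" using n1 by auto
    have "0 \<le> (2 * kappa i + deg i) / (2 * mu i)"
      using kap[OF i] deg0[OF i] mupos[OF i] by simp
    then show ?thesis using Dge[OF i] by linarith
  qed
  have c2: "p * ((Ep + K) / D) powr (1 / p) \<le> q * ((Eq + K) / D) powr (1 / q)"
  proof (cases "p = q")
    case True
    then have "g = f" using p0 by (simp add: g_ph r_def ph_one fun_eq_iff)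
    then have "Ep = Eq" using True by (simp add: Ep_def Eq_def)
    then show ?thesis using True by simp
  next
    case False
    then have pq: "p < q" using assms(4) by simp
    define t where "t = p / q"
    have t01: "0 < t" "t < 1" using pq p0 by (auto simp: t_def)
    define V1 where "V1 = (\<Sum>(i,j)\<in>edges n adj. w i j * ((h i + h j) / 2))"
    have V10: "0 \<le> V1" unfolding V1_def using edge_props h0
      by (intro sum_nonneg) (auto intro!: mult_nonneg_nonneg simp: less_imp_le)
    have "Ep \<le> (\<Sum>(i,j)\<in>edges n adj. r powr p * ((w i j * \<bar>f i - sigma i j * f j\<bar> powr q) powr t * (w i j * ((h i + h j) / 2)) powr (1 - t)))"
      unfolding Ep_def
    proof (rule sum_mono)
      fix e assume e: "e \<in> edges n adj"
      obtain i j where ij: "e = (i, j)" by fastforce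
      have "w i j * \<bar>ph r (f i) - ph r (sigma i j * f j)\<bar> powr p
          \<le> r powr p * ((w i j * \<bar>f i - sigma i j * f j\<bar> powr q) powr t * (w i j * ((\<bar>f i\<bar> powr q + \<bar>sigma i j * f j\<bar> powr q) / 2)) powr (1 - t))"
        using edge2[of "w i j" p q "f i" "sigma i j * f j"] edge_props[of i j] e ij assms(3) pq
        by (simp add: r_def t_def)
      then show "(case e of (i, j) \<Rightarrow> w i j * \<bar>g i - sigma i j * g j\<bar> powr p)
          \<le> (case e of (i, j) \<Rightarrow> r powr p * ((w i j * \<bar>f i - sigma i j * f j\<bar> powr q) powr t * (w i j * ((h i + h j) / 2)) powr (1 - t)))"
        using edge_g[of i j] edge_abs[of i j] e ij by (simp add: h_def)
    qed
    also have "\<dots> = r powr p * (\<Sum>(i,j)\<in>edges n adj. (w i j * \<bar>f i - sigma i j * f j\<bar> powr q) powr t * (w i j * ((h i + h j) / 2)) powr (1 - t))"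
      by (simp add: sum_distrib_left split_def)
    also have "\<dots> \<le> r powr p * (Eq powr t * V1 powr (1 - t))"
    proof (rule mult_left_mono)
      have "(\<Sum>x\<in>edges n adj. (\<lambda>(i,j). w i j * \<bar>f i - sigma i j * f j\<bar> powr q) x powr t * (\<lambda>(i,j). w i j * ((h i + h j) / 2)) x powr (1 - t))
           \<le> (\<Sum>x\<in>edges n adj. (\<lambda>(i,j). w i j * \<bar>f i - sigma i j * f j\<bar> powr q) x) powr t * (\<Sum>x\<in>edges n adj. (\<lambda>(i,j). w i j * ((h i + h j) / 2)) x) powr (1 - t)"
        using edge_props h0 t01 finE
        by (intro holder) (auto intro!: mult_nonneg_nonneg simp: less_imp_le)
      then show "(\<Sum>(i,j)\<in>edges n adj. (w i j * \<bar>f i - sigma i j * f j\<bar> powr q) powr t * (w i j * ((h i + h j) / 2)) powr (1 - t))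
          \<le> Eq powr t * V1 powr (1 - t)"
        by (simp add: Eq_def V1_def split_def)
    qed simp
    finally have Ep_le: "Ep \<le> r powr p * (Eq powr t * V1 powr (1 - t))" .
    have K_le: "K \<le> r powr p * (K powr t * K powr (1 - t))"
    proof -
      have "K \<le> (\<Sum>i\<in>{1..n}. r powr p * ((kappa i * h i) powr t * (kappa i * h i) powr (1 - t)))"
        unfolding K_def using kap h0 assms(3,4) p0
        by (intro sum_mono vert2) (auto simp: r_def)
      also have "\<dots> = r powr p * (\<Sum>i\<in>{1..n}. (kappa i * h i) powr t * (kappa i * h i) powr (1 - t))"
        by (simp add: sum_distrib_left)
      also have "\<dots> \<le> r powr p * (K powr t * K powr (1 - t))"
        unfolding K_def using kap h0 t01
        by (intro mult_left_mono holder) auto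
      finally show ?thesis .
    qed
    have "Ep + K \<le> r powr p * (Eq powr t * V1 powr (1 - t) + K powr t * K powr (1 - t))"
      using Ep_le K_le by (simp add: distrib_left)
    also have "\<dots> \<le> r powr p * ((Eq + K) powr t * (V1 + K) powr (1 - t))"
      using Eq0 V10 K0 t01 by (intro mult_left_mono holder2) auto
    also have "\<dots> \<le> r powr p * ((Eq + K) powr t * D powr (1 - t))"
    proof -
      have "V1 = (\<Sum>i\<in>{1..n}. deg i * h i) / 2"
      proof -
        have "V1 = (\<Sum>(i,j)\<in>edges n adj. w i j * (h i + h j)) / 2"
          unfolding V1_def by (simp add: sum_divide_distrib split_def)
        then show ?thesis using edges_double[OF sg, of h] by (simp add: deg_def)
      qed
      then have "V1 + K = (\<Sum>i\<in>{1..n}. (deg i / 2 + kappa i) * h i)"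
        by (simp add: K_def sum_divide_distrib sum.distrib[symmetric] algebra_simps)
      also have "\<dots> \<le> (\<Sum>i\<in>{1..n}. D * mu i * h i)"
      proof (rule sum_mono)
        fix i assume i: "i \<in> {1..n}"
        have "deg i / 2 + kappa i \<le> D * mu i"
          using Dge[OF i] mupos[OF i] by (simp add: field_simps)
        then show "(deg i / 2 + kappa i) * h i \<le> D * mu i * h i"
          using h0 by (intro mult_right_mono) auto
      qed
      also have "\<dots> = D" using sph by (simp add: sum_distrib_left[symmetric] mult.assoc)
      finally have "V1 + K \<le> D" .
      then have "(V1 + K) powr (1 - t) \<le> D powr (1 - t)"
        using V10 K0 t01 by (intro powr_mono2) auto
      then show ?thesis
        using Eq0 K0 by (intro mult_left_mono) (auto simp: r_def)
    qed
    finally have H: "Ep + K \<le> (q/p) powr p * ((Eq + K) powr (p/q) * D powr (1 - p/q))"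
      by (simp add: r_def t_def)
    show ?thesis
    proof (cases "D = 0")
      case True then show ?thesis by simp
    next
      case False
      then have "0 < D" using D0 by simp
      then show ?thesis using final_alg[OF _ _ _ assms(3) pq H] Ep0 Eq0 K0 by simp
    qed
  qed
  show ?thesis
    using c1 c2 Rp Rq by (simp add: g_def D_def)
qed

end
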